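(* Let $G$ be a directed graph and $D$ a demand such that every $h$-length moving cut $C$ satisfies $\mathrm{spars}_h(C,D)\ge\phi$, where $\phi>0$. Then $D$ can be routed in $G$ along paths of length at most $h$ with congestion at most $O(\log N/\phi)$.
   Context: $G=(V,E)$ is a finite directed graph with $n=|V|$; every edge has a length $\ell(e)$ and capacity $u(e)$, positive integers bounded by $N=\mathrm{poly}(n)$. A demand is $D:V\times V\to\mathbb{R}_{\ge0}$. An $h$-length moving cut is $C:E\to\{0,\tfrac1h,\dots\}\cap[0,1]$ with size $|C|=\sum_eu(e)C(e)$; $G-C$ is $G$ with lengths $\ell(e)+h\cdot C(e)$. $\mathrm{sep}_h(C,D)=\sum_{(u,v):\mathrm{dist}_{G-C}(u,v)>h}D(u,v)$ and $\mathrm{spars}_h(C,D)=|C|/\mathrm{sep}_h(C,D)$, taken as $+\infty$ when $\mathrm{sep}_h(C,D)=0$. A flow assigns nonnegative values to simple directed paths; it routes $D$ if for each ordered pair $(v,w)$ the total value on $v\to w$ paths equals $D(v,w)$; its congestion is $\max_e(\text{flow through }e)/u(e)$. *)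

theory Defs
  imports "HOL-Analysis.Analysis" "HOL-Library.Extended_Real"
begin

definition path_edges :: "nat list \<Rightarrow> (nat \<times> nat) list" where
  "path_edges p = zip p (tl p)"

definition simple_path :: "(nat \<times> nat) set \<Rightarrow> nat list \<Rightarrow> nat \<Rightarrow> nat \<Rightarrow> bool" where
  "simple_path E p v w \<longleftrightarrow> p \<noteq> [] \<and> hd p = v \<and> last p = w \<and> distinct p
     \<and> set (path_edges p) \<subseteq> E"

definition path_len :: "(nat \<times> nat \<Rightarrow> real) \<Rightarrow> nat list \<Rightarrow> real" where
  "path_len L p = sum_list (map L (path_edges p))"

text \<open>Distance w.r.t. length function L (infinite if unreachable).\<close>
definition dist_G :: "(nat \<times> nat) set \<Rightarrow> (nat \<times> nat \<Rightarrow> real) \<Rightarrow> nat \<Rightarrow> nat \<Rightarrow> ereal" where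
  "dist_G E L v w = (INF p \<in> {p. simple_path E p v w}. ereal (path_len L p))"

definition moving_cut :: "(nat \<times> nat) set \<Rightarrow> nat \<Rightarrow> (nat \<times> nat \<Rightarrow> real) \<Rightarrow> bool" where
  "moving_cut E h C \<longleftrightarrow> (\<forall>e\<in>E. \<exists>j::nat. j \<le> h \<and> C e = real j / real h)"

definition cut_size :: "(nat \<times> nat) set \<Rightarrow> (nat \<times> nat \<Rightarrow> nat) \<Rightarrow> (nat \<times> nat \<Rightarrow> real) \<Rightarrow> real" where
  "cut_size E u C = (\<Sum>e\<in>E. real (u e) * C e)"

definition cut_len :: "(nat \<times> nat \<Rightarrow> nat) \<Rightarrow> nat \<Rightarrow> (nat \<times> nat \<Rightarrow> real) \<Rightarrow> nat \<times> nat \<Rightarrow> real" where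
  "cut_len l h C e = real (l e) + real h * C e"

definition sep :: "nat set \<Rightarrow> (nat \<times> nat) set \<Rightarrow> (nat \<times> nat \<Rightarrow> nat) \<Rightarrow> nat \<Rightarrow>
    (nat \<times> nat \<Rightarrow> real) \<Rightarrow> (nat \<Rightarrow> nat \<Rightarrow> real) \<Rightarrow> real" where
  "sep V E l h C D = (\<Sum>(v, w) \<in> {(v, w) \<in> V \<times> V. dist_G E (cut_len l h C) v w > ereal (real h)}. D v w)"

definition spars :: "nat set \<Rightarrow> (nat \<times> nat) set \<Rightarrow> (nat \<times> nat \<Rightarrow> nat) \<Rightarrow> (nat \<times> nat \<Rightarrow> nat) \<Rightarrow> nat \<Rightarrow>
    (nat \<times> nat \<Rightarrow> real) \<Rightarrow> (nat \<Rightarrow> nat \<Rightarrow> real) \<Rightarrow> ereal" where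
  "spars V E l u h C D =
     (if sep V E l h C D = 0 then \<infinity> else ereal (cut_size E u C / sep V E l h C D))"

definition is_flow :: "(nat \<times> nat) set \<Rightarrow> (nat list \<Rightarrow> real) \<Rightarrow> bool" where
  "is_flow E f \<longleftrightarrow> (\<forall>p. f p \<ge> 0) \<and> (\<forall>p. f p \<noteq> 0 \<longrightarrow> (\<exists>v w. simple_path E p v w))"

definition routes :: "nat set \<Rightarrow> (nat \<times> nat) set \<Rightarrow> (nat list \<Rightarrow> real) \<Rightarrow> (nat \<Rightarrow> nat \<Rightarrow> real) \<Rightarrow> bool" where
  "routes V E f D \<longleftrightarrow> (\<forall>v\<in>V. \<forall>w\<in>V. (\<Sum>p \<in> {p. simple_path E p v w}. f p) = D v w)"

definition edge_flow :: "(nat \<times> nat) set \<Rightarrow> (nat list \<Rightarrow> real) \<Rightarrow> nat \<times> nat \<Rightarrow> real" where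
  "edge_flow E f e = (\<Sum>p \<in> {p. (\<exists>v w. simple_path E p v w) \<and> e \<in> set (path_edges p)}. f p)"

text \<open>Congestion max_e flow(e)/u(e) (over the nonempty-or-empty edge set; 0 if E = {}).\<close>
definition congestion :: "(nat \<times> nat) set \<Rightarrow> (nat \<times> nat \<Rightarrow> nat) \<Rightarrow> (nat list \<Rightarrow> real) \<Rightarrow> real" where
  "congestion E u f = Max (insert 0 ((\<lambda>e. edge_flow E f e / real (u e)) ` E))"

end

theory Submission
  imports Defs
begin


type_synonym 'x cstr = "('x \<Rightarrow> real) \<times> real"

definition feas :: "'x set \<Rightarrow> 'x cstr set \<Rightarrow> bool" where
  "feas X S \<longleftrightarrow> (\<exists>v. \<forall>c\<in>S. (\<Sum>x\<in>X. fst c x * v x) \<le> snd c)"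

definition comb :: "'x cstr set \<Rightarrow> 'x cstr \<Rightarrow> bool" where
  "comb S t \<longleftrightarrow> (\<exists>lam. (\<forall>c\<in>S. lam c \<ge> 0) \<and> (\<forall>x. (\<Sum>c\<in>S. lam c * fst c x) = fst t x)
      \<and> (\<Sum>c\<in>S. lam c * snd c) = snd t)"

definition cadd :: "'x cstr \<Rightarrow> 'x cstr \<Rightarrow> 'x cstr" where
  "cadd s t = ((\<lambda>x. fst s x + fst t x), snd s + snd t)"

definition cscale :: "real \<Rightarrow> 'x cstr \<Rightarrow> 'x cstr" where
  "cscale r s = ((\<lambda>x. r * fst s x), r * snd s)"

lemma comb_mem:
  assumes "finite S" "c0 \<in> S" shows "comb S c0"
proof -
  let ?lam = "\<lambda>c. if c = c0 then 1 else (0::real)"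
  have "(\<Sum>c\<in>S. ?lam c * fst c x) = (\<Sum>c\<in>S. if c = c0 then fst c x else 0)" for x
    by (intro sum.cong) auto
  then have 1: "(\<Sum>c\<in>S. ?lam c * fst c x) = fst c0 x" for x
    using assms by simp
  have "(\<Sum>c\<in>S. ?lam c * snd c) = (\<Sum>c\<in>S. if c = c0 then snd c else 0)"
    by (intro sum.cong) auto
  then have 2: "(\<Sum>c\<in>S. ?lam c * snd c) = snd c0"
    using assms by simp
  show ?thesis unfolding comb_def using 1 2 by (intro exI[of _ ?lam]) auto
qed

lemma comb_add:
  assumes "comb S s" "comb S t" shows "comb S (cadd s t)"
proof -
  obtain l1 where l1: "\<forall>c\<in>S. l1 c \<ge> 0" "\<forall>x. (\<Sum>c\<in>S. l1 c * fst c x) = fst s x"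
      "(\<Sum>c\<in>S. l1 c * snd c) = snd s" using assms(1) unfolding comb_def by blast
  obtain l2 where l2: "\<forall>c\<in>S. l2 c \<ge> 0" "\<forall>x. (\<Sum>c\<in>S. l2 c * fst c x) = fst t x"
      "(\<Sum>c\<in>S. l2 c * snd c) = snd t" using assms(2) unfolding comb_def by blast
  show ?thesis unfolding comb_def cadd_def
    apply (rule exI[of _ "\<lambda>c. l1 c + l2 c"])
    using l1 l2 by (simp add: distrib_right sum.distrib)
qed

lemma comb_scale:
  assumes "comb S s" "r \<ge> 0" shows "comb S (cscale r s)"
proof -
  obtain l1 where l1: "\<forall>c\<in>S. l1 c \<ge> 0" "\<forall>x. (\<Sum>c\<in>S. l1 c * fst c x) = fst s x"
      "(\<Sum>c\<in>S. l1 c * snd c) = snd s" using assms(1) unfolding comb_def by blast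
  show ?thesis unfolding comb_def cscale_def
    apply (rule exI[of _ "\<lambda>c. r * l1 c"])
    using l1 assms(2) by (simp add: sum_distrib_left mult.assoc flip: l1(2,3))
qed

lemma comb_trans:
  assumes "finite S" "finite S'" "\<forall>c'\<in>S'. comb S c'" "comb S' t"
  shows "comb S t"
proof -
  have "\<forall>c'\<in>S'. \<exists>lam. (\<forall>c\<in>S. lam c \<ge> 0) \<and>
      (\<forall>x. (\<Sum>c\<in>S. lam c * fst c x) = fst c' x) \<and> (\<Sum>c\<in>S. lam c * snd c) = snd c'"
    using assms(3) unfolding comb_def by blast
  from bchoice[OF this] obtain M where M: "\<forall>c'\<in>S'. (\<forall>c\<in>S. M c' c \<ge> 0) \<and>
      (\<forall>x. (\<Sum>c\<in>S. M c' c * fst c x) = fst c' x) \<and> (\<Sum>c\<in>S. M c' c * snd c) = snd c'"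
    by blast
  obtain l where l: "\<forall>c\<in>S'. l c \<ge> 0" "\<forall>x. (\<Sum>c\<in>S'. l c * fst c x) = fst t x"
      "(\<Sum>c\<in>S'. l c * snd c) = snd t" using assms(4) unfolding comb_def by blast
  let ?lam = "\<lambda>c. \<Sum>c'\<in>S'. l c' * M c' c"
  have "(\<Sum>c\<in>S. ?lam c * fst c x) = fst t x" for x
  proof -
    have "(\<Sum>c\<in>S. ?lam c * fst c x) = (\<Sum>c\<in>S. \<Sum>c'\<in>S'. l c' * (M c' c * fst c x))"
      by (simp add: sum_distrib_right mult.assoc)
    also have "\<dots> = (\<Sum>c'\<in>S'. l c' * (\<Sum>c\<in>S. M c' c * fst c x))"
      by (subst sum.swap) (simp add: sum_distrib_left)
    also have "\<dots> = (\<Sum>c'\<in>S'. l c' * fst c' x)"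
      using M by (intro sum.cong) auto
    finally show ?thesis using l(2) by simp
  qed
  moreover have "(\<Sum>c\<in>S. ?lam c * snd c) = snd t"
  proof -
    have "(\<Sum>c\<in>S. ?lam c * snd c) = (\<Sum>c\<in>S. \<Sum>c'\<in>S'. l c' * (M c' c * snd c))"
      by (simp add: sum_distrib_right mult.assoc)
    also have "\<dots> = (\<Sum>c'\<in>S'. l c' * (\<Sum>c\<in>S. M c' c * snd c))"
      by (subst sum.swap) (simp add: sum_distrib_left)
    also have "\<dots> = (\<Sum>c'\<in>S'. l c' * snd c')"
      using M by (intro sum.cong) auto
    finally show ?thesis using l(3) by simp
  qed
  moreover have "\<forall>c\<in>S. ?lam c \<ge> 0"
    using M l(1) by (auto intro!: sum_nonneg)
  ultimately show ?thesis unfolding comb_def by (intro exI[of _ ?lam] conjI allI) auto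
qed

lemma comb_coord_zero:
  assumes "comb S' t" "\<forall>c\<in>S'. fst c x0 = 0" shows "fst t x0 = 0"
proof -
  obtain l where l: "\<forall>x. (\<Sum>c\<in>S'. l c * fst c x) = fst t x"
    using assms(1) unfolding comb_def by blast
  have "fst t x0 = (\<Sum>c\<in>S'. l c * fst c x0)" using l by simp
  also have "\<dots> = 0" using assms(2) by simp
  finally show ?thesis .
qed

lemma farkas_set:
  assumes "finite X"
  shows "finite S \<Longrightarrow> \<not> feas X S \<Longrightarrow> \<exists>t. comb S t \<and> (\<forall>x\<in>X. fst t x = 0) \<and> snd t < 0"
  using assms
proof (induction X arbitrary: S rule: finite_induct)
  case empty
  then obtain c where c: "c \<in> S" "snd c < 0" unfolding feas_def by force
  then show ?case using comb_mem[OF empty(1) c(1)] by blast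
next
  case (insert x0 X)
  define S0 where "S0 = {c\<in>S. fst c x0 = 0}"
  define Sp where "Sp = {c\<in>S. fst c x0 > 0}"
  define Sn where "Sn = {c\<in>S. fst c x0 < 0}"
  define cmb where "cmb = (\<lambda>(p::'a cstr, n::'a cstr). cadd (cscale (- fst n x0) p) (cscale (fst p x0) n))"
  define S' where "S' = S0 \<union> cmb ` (Sp \<times> Sn)"
  have finS: "finite S0" "finite Sp" "finite Sn" using insert(4) unfolding S0_def Sp_def Sn_def by auto
  have finS': "finite S'" unfolding S'_def using finS by auto
  have cmb_fst: "fst (cmb (p, n)) x = (- fst n x0) * fst p x + fst p x0 * fst n x" for p n x
    unfolding cmb_def cadd_def cscale_def by simp
  have cmb_snd: "snd (cmb (p, n)) = (- fst n x0) * snd p + fst p x0 * snd n" for p n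
    unfolding cmb_def cadd_def cscale_def by simp
  have "\<not> feas X S'"
  proof
    assume "feas X S'"
    then obtain v where v: "\<forall>c\<in>S'. (\<Sum>x\<in>X. fst c x * v x) \<le> snd c" unfolding feas_def by blast
    define r where "r = (\<lambda>c::'a cstr. snd c - (\<Sum>x\<in>X. fst c x * v x))"
    have r0: "r c \<ge> 0" if "c \<in> S0" for c using v that unfolding S'_def r_def by auto
    have rpn: "r n / fst n x0 \<le> r p / fst p x0" if "p \<in> Sp" "n \<in> Sn" for p n
    proof -
      have "cmb (p, n) \<in> S'" unfolding S'_def using that by auto
      then have "(\<Sum>x\<in>X. fst (cmb (p, n)) x * v x) \<le> snd (cmb (p, n))" using v by blast
      also have "(\<Sum>x\<in>X. fst (cmb (p, n)) x * v x) =
          (- fst n x0) * (\<Sum>x\<in>X. fst p x * v x) + fst p x0 * (\<Sum>x\<in>X. fst n x * v x)"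
      proof -
        have "(\<Sum>x\<in>X. fst (cmb (p, n)) x * v x) =
          (\<Sum>x\<in>X. (- fst n x0) * (fst p x * v x) + fst p x0 * (fst n x * v x))"
          by (intro sum.cong) (auto simp: cmb_fst algebra_simps)
        also have "\<dots> = (- fst n x0) * (\<Sum>x\<in>X. fst p x * v x) + fst p x0 * (\<Sum>x\<in>X. fst n x * v x)"
          by (simp only: sum.distrib sum_distrib_left)
        finally show ?thesis .
      qed
      finally have "0 \<le> (- fst n x0) * r p + fst p x0 * r n"
        unfolding r_def cmb_snd by (simp add: algebra_simps)
      moreover have "fst p x0 > 0" "fst n x0 < 0" using that unfolding Sp_def Sn_def by auto
      ultimately show ?thesis by (simp add: field_simps)
    qed
    define y where "y = (if Sn \<noteq> {} then Max ((\<lambda>n. r n / fst n x0) ` Sn)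
        else if Sp \<noteq> {} then Min ((\<lambda>p. r p / fst p x0) ` Sp) else 0)"
    have yp: "y \<le> r p / fst p x0" if "p \<in> Sp" for p
    proof (cases "Sn \<noteq> {}")
      case True
      have "Max ((\<lambda>n. r n / fst n x0) ` Sn) \<le> r p / fst p x0"
        using True finS(3) rpn[OF that] by (subst Max_le_iff) auto
      then show ?thesis unfolding y_def using True by simp
    next
      case False
      then have "Sp \<noteq> {}" using that by auto
      then show ?thesis unfolding y_def using False finS(2) that by simp
    qed
    have yn: "r n / fst n x0 \<le> y" if "n \<in> Sn" for n
    proof -
      have "Sn \<noteq> {}" using that by auto
      then show ?thesis unfolding y_def using finS(3) that by simp
    qed
    define v' where "v' = v(x0 := y)"
    have "\<forall>c\<in>S. (\<Sum>x\<in>insert x0 X. fst c x * v' x) \<le> snd c"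
    proof
      fix c assume c: "c \<in> S"
      have eq: "(\<Sum>x\<in>insert x0 X. fst c x * v' x) = fst c x0 * y + (\<Sum>x\<in>X. fst c x * v x)"
      proof -
        have "(\<Sum>x\<in>X. fst c x * v' x) = (\<Sum>x\<in>X. fst c x * v x)"
          using insert(2) unfolding v'_def by (intro sum.cong) auto
        then show ?thesis using insert(1,2) unfolding v'_def by simp
      qed
      have "fst c x0 * y \<le> r c"
      proof -
        have "fst c x0 = 0 \<or> fst c x0 > 0 \<or> fst c x0 < 0" by linarith
        then consider "c \<in> S0" | "c \<in> Sp" | "c \<in> Sn" using c unfolding S0_def Sp_def Sn_def
          by blast
        then show ?thesis
        proof cases
          case 1 then show ?thesis using r0 unfolding S0_def by auto
        next
          case 2
          then have "fst c x0 > 0" unfolding Sp_def by auto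
          then show ?thesis using yp[OF 2] by (simp add: field_simps)
        next
          case 3
          then have "fst c x0 < 0" unfolding Sn_def by auto
          then show ?thesis using yn[OF 3] by (simp add: field_simps)
        qed
      qed
      then show "(\<Sum>x\<in>insert x0 X. fst c x * v' x) \<le> snd c" using eq unfolding r_def by simp
    qed
    then show False using insert(5) unfolding feas_def by blast
  qed
  from insert(3)[OF finS' this] obtain t where t: "comb S' t" "\<forall>x\<in>X. fst t x = 0" "snd t < 0"
    by blast
  have "\<forall>c'\<in>S'. comb S c'"
  proof
    fix c' assume "c' \<in> S'"
    then consider "c' \<in> S0" | p n where "p \<in> Sp" "n \<in> Sn" "c' = cmb (p, n)"
      unfolding S'_def by auto
    then show "comb S c'"
    proof cases
      case 1 then show ?thesis using comb_mem[OF insert(4)] unfolding S0_def by auto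
    next
      case 2
      have "p \<in> S" "n \<in> S" "fst p x0 > 0" "fst n x0 < 0" using 2 unfolding Sp_def Sn_def by auto
      have "comb S (cscale (- fst n x0) p)" by (rule comb_scale) (use comb_mem[OF insert(4)] \<open>p \<in> S\<close> \<open>fst n x0 < 0\<close> in auto)
      moreover have "comb S (cscale (fst p x0) n)" by (rule comb_scale) (use comb_mem[OF insert(4)] \<open>n \<in> S\<close> \<open>fst p x0 > 0\<close> in auto)
      ultimately show ?thesis unfolding 2(3) cmb_def by (simp add: comb_add)
    qed
  qed
  then have "comb S t" using comb_trans[OF insert(4) finS' _ t(1)] by blast
  moreover have "fst t x0 = 0"
  proof (rule comb_coord_zero[OF t(1)])
    show "\<forall>c\<in>S'. fst c x0 = 0"
      unfolding S'_def S0_def using cmb_fst by auto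
  qed
  ultimately have "comb S t \<and> (\<forall>x\<in>insert x0 X. fst t x = 0) \<and> snd t < 0" using t by auto
  then show ?case by blast
qed


lemma sum_fiber:
  assumes "finite I"
  shows "(\<Sum>i\<in>I. (L (g i) / real (card {j\<in>I. g j = g i})) * F (g i)) = (\<Sum>c\<in>g ` I. L c * F c)"
proof -
  have "(\<Sum>i\<in>I. (L (g i) / real (card {j\<in>I. g j = g i})) * F (g i)) =
      (\<Sum>c\<in>g ` I. \<Sum>i\<in>{i\<in>I. g i = c}. (L (g i) / real (card {j\<in>I. g j = g i})) * F (g i))"
    using assms by (rule sum.image_gen)
  also have "\<dots> = (\<Sum>c\<in>g ` I. L c * F c)"
  proof (rule sum.cong[OF refl])
    fix c assume c: "c \<in> g ` I"
    have "(\<Sum>i\<in>{i\<in>I. g i = c}. (L (g i) / real (card {j\<in>I. g j = g i})) * F (g i)) =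
        (\<Sum>i\<in>{i\<in>I. g i = c}. (L c / real (card {j\<in>I. g j = c})) * F c)"
      by (intro sum.cong) auto
    also have "\<dots> = real (card {j\<in>I. g j = c}) * ((L c / real (card {j\<in>I. g j = c})) * F c)"
      by simp
    also have "card {j\<in>I. g j = c} \<noteq> 0" using c assms by auto
    then have "real (card {j\<in>I. g j = c}) * ((L c / real (card {j\<in>I. g j = c})) * F c) = L c * F c"
      by simp
    finally show "(\<Sum>i\<in>{i\<in>I. g i = c}. (L (g i) / real (card {j\<in>I. g j = g i})) * F (g i)) = L c * F c" .
  qed
  finally show ?thesis .
qed

lemma farkas_idx:
  fixes A :: "'i \<Rightarrow> 'x \<Rightarrow> real" and b :: "'i \<Rightarrow> real"
  assumes "finite X" "finite I" "\<not> (\<exists>v. \<forall>i\<in>I. (\<Sum>x\<in>X. A i x * v x) \<le> b i)"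
  shows "\<exists>mu. (\<forall>i\<in>I. mu i \<ge> 0) \<and> (\<forall>x\<in>X. (\<Sum>i\<in>I. mu i * A i x) = 0) \<and> (\<Sum>i\<in>I. mu i * b i) < 0"
proof -
  define g where "g = (\<lambda>i. (A i, b i))"
  have "\<not> feas X (g ` I)" using assms(3) unfolding feas_def g_def by auto
  from farkas_set[OF assms(1) _ this] assms(2) obtain t where
    t: "comb (g ` I) t" "\<forall>x\<in>X. fst t x = 0" "snd t < 0" by auto
  then obtain lam where lam: "\<forall>c\<in>g ` I. lam c \<ge> 0" "\<forall>x. (\<Sum>c\<in>g ` I. lam c * fst c x) = fst t x"
      "(\<Sum>c\<in>g ` I. lam c * snd c) = snd t" unfolding comb_def by blast
  define mu where "mu = (\<lambda>i. lam (g i) / real (card {j\<in>I. g j = g i}))"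
  have "\<forall>i\<in>I. mu i \<ge> 0" using lam(1) unfolding mu_def by auto
  moreover have "(\<Sum>i\<in>I. mu i * A i x) = 0" if "x \<in> X" for x
  proof -
    have "(\<Sum>i\<in>I. mu i * A i x) = (\<Sum>i\<in>I. mu i * fst (g i) x)" unfolding g_def by simp
    also have "\<dots> = (\<Sum>c\<in>g ` I. lam c * fst c x)"
      unfolding mu_def using sum_fiber[OF assms(2), of lam g "\<lambda>c. fst c x"] by simp
    finally show ?thesis using lam(2) t(2) that by simp
  qed
  moreover have "(\<Sum>i\<in>I. mu i * b i) < 0"
  proof -
    have "(\<Sum>i\<in>I. mu i * b i) = (\<Sum>i\<in>I. mu i * snd (g i))" unfolding g_def by simp
    also have "\<dots> = (\<Sum>c\<in>g ` I. lam c * snd c)"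
      unfolding mu_def using sum_fiber[OF assms(2), of lam g "\<lambda>c. snd c"] by simp
    finally show ?thesis using lam(3) t(3) by simp
  qed
  ultimately show ?thesis by blast
qed

datatype ('p, 'q, 'e) cix = CNN 'p | CDU 'q | CDL 'q | CCAP 'e

fun cA :: "('p \<Rightarrow> 'q) \<Rightarrow> ('p \<Rightarrow> 'e set) \<Rightarrow> ('p, 'q, 'e) cix \<Rightarrow> 'p \<Rightarrow> real" where
  "cA pr ed (CNN p') p = (if p = p' then -1 else 0)"
| "cA pr ed (CDU q) p = (if pr p = q then 1 else 0)"
| "cA pr ed (CDL q) p = (if pr p = q then -1 else 0)"
| "cA pr ed (CCAP e) p = (if e \<in> ed p then 1 else 0)"

fun cb :: "('q \<Rightarrow> real) \<Rightarrow> ('e \<Rightarrow> real) \<Rightarrow> ('p, 'q, 'e) cix \<Rightarrow> real" where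
  "cb Dm cap (CNN p') = 0"
| "cb Dm cap (CDU q) = Dm q"
| "cb Dm cap (CDL q) = - Dm q"
| "cb Dm cap (CCAP e) = cap e"

lemma sum_cix:
  assumes "finite P" "finite Q" "finite E"
  shows "(\<Sum>i\<in>CNN ` P \<union> CDU ` Q \<union> CDL ` Q \<union> CCAP ` E. F i) =
    (\<Sum>p\<in>P. F (CNN p)) + (\<Sum>q\<in>Q. F (CDU q)) + (\<Sum>q\<in>Q. F (CDL q)) + (\<Sum>e\<in>E. F (CCAP e))"
proof -
  have d1: "(CNN ` P \<union> CDU ` Q \<union> CDL ` Q) \<inter> CCAP ` E = {}" by auto
  have d2: "(CNN ` P \<union> CDU ` Q) \<inter> CDL ` Q = {}" by auto
  have d3: "CNN ` P \<inter> CDU ` Q = {}" by auto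
  show ?thesis using assms
    by (simp add: sum.union_disjoint[OF _ _ d1] sum.union_disjoint[OF _ _ d2]
        sum.union_disjoint[OF _ _ d3] sum.reindex inj_on_def)
qed

lemma lp_alt:
  fixes P :: "'p set" and Q :: "'q set" and E :: "'e set" and Dm :: "'q \<Rightarrow> real" and cap :: "'e \<Rightarrow> real"
  assumes "finite P" "finite Q" "finite E" "\<forall>p\<in>P. pr p \<in> Q"
    and nofeas: "\<not> (\<exists>g. (\<forall>p\<in>P. g p \<ge> 0) \<and> (\<forall>q\<in>Q. (\<Sum>p\<in>{p\<in>P. pr p = q}. g p) = Dm q) \<and>
        (\<forall>e\<in>E. (\<Sum>p\<in>{p\<in>P. e \<in> ed p}. g p) \<le> cap e))"
  shows "\<exists>y z. (\<forall>e\<in>E. z e \<ge> 0) \<and>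
     (\<forall>p\<in>P. y (pr p) \<le> (\<Sum>e\<in>E. if e \<in> ed p then z e else 0)) \<and>
     (\<Sum>q\<in>Q. y q * Dm q) > (\<Sum>e\<in>E. z e * cap e)"
proof -
  define I where "I = CNN ` P \<union> CDU ` Q \<union> CDL ` Q \<union> CCAP ` E"
  have finI: "finite I" unfolding I_def using assms(1-3) by auto
  have "\<not> (\<exists>v. \<forall>i\<in>I. (\<Sum>x\<in>P. cA pr ed i x * v x) \<le> cb Dm cap i)"
  proof
    assume "\<exists>v. \<forall>i\<in>I. (\<Sum>x\<in>P. cA pr ed i x * v x) \<le> cb Dm cap i"
    then obtain v where v: "\<forall>i\<in>I. (\<Sum>x\<in>P. cA pr ed i x * v x) \<le> cb Dm cap i" by blast
    have "\<forall>p\<in>P. v p \<ge> 0"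
    proof
      fix p assume p: "p \<in> P"
      then have "(\<Sum>x\<in>P. cA pr ed (CNN p) x * v x) \<le> 0" using v unfolding I_def by force
      moreover have "(\<Sum>x\<in>P. cA pr ed (CNN p) x * v x) = (\<Sum>x\<in>P. if x = p then - v x else 0)"
        by (intro sum.cong) auto
      ultimately show "v p \<ge> 0" using p assms(1) by simp
    qed
    moreover have "\<forall>q\<in>Q. (\<Sum>p\<in>{p\<in>P. pr p = q}. v p) = Dm q"
    proof
      fix q assume q: "q \<in> Q"
      have "(\<Sum>x\<in>P. cA pr ed (CDU q) x * v x) = (\<Sum>x\<in>P. if pr x = q then v x else 0)"
        by (intro sum.cong) auto
      then have eq1: "(\<Sum>x\<in>P. cA pr ed (CDU q) x * v x) = (\<Sum>p\<in>{p\<in>P. pr p = q}. v p)"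
        using assms(1) by (simp add: sum.inter_filter)
      have "(\<Sum>x\<in>P. cA pr ed (CDL q) x * v x) = - (\<Sum>x\<in>P. if pr x = q then v x else 0)"
        by (subst sum_negf[symmetric], intro sum.cong) auto
      then have eq2: "(\<Sum>x\<in>P. cA pr ed (CDL q) x * v x) = - (\<Sum>p\<in>{p\<in>P. pr p = q}. v p)"
        using assms(1) by (simp add: sum.inter_filter)
      have "(\<Sum>x\<in>P. cA pr ed (CDU q) x * v x) \<le> Dm q" using v q unfolding I_def by force
      moreover have "(\<Sum>x\<in>P. cA pr ed (CDL q) x * v x) \<le> - Dm q" using v q unfolding I_def by force
      ultimately show "(\<Sum>p\<in>{p\<in>P. pr p = q}. v p) = Dm q" using eq1 eq2 by linarith
    qed
    moreover have "\<forall>e\<in>E. (\<Sum>p\<in>{p\<in>P. e \<in> ed p}. v p) \<le> cap e"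
    proof
      fix e assume e: "e \<in> E"
      have "(\<Sum>x\<in>P. cA pr ed (CCAP e) x * v x) = (\<Sum>x\<in>P. if e \<in> ed x then v x else 0)"
        by (intro sum.cong) auto
      then have eq1: "(\<Sum>x\<in>P. cA pr ed (CCAP e) x * v x) = (\<Sum>p\<in>{p\<in>P. e \<in> ed p}. v p)"
        using assms(1) by (simp add: sum.inter_filter)
      have "(\<Sum>x\<in>P. cA pr ed (CCAP e) x * v x) \<le> cap e" using v e unfolding I_def by force
      then show "(\<Sum>p\<in>{p\<in>P. e \<in> ed p}. v p) \<le> cap e" using eq1 by simp
    qed
    ultimately show False using nofeas by blast
  qed
  from farkas_idx[OF assms(1) finI this] obtain mu where
    mu: "\<forall>i\<in>I. mu i \<ge> 0" "\<forall>x\<in>P. (\<Sum>i\<in>I. mu i * cA pr ed i x) = 0"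
        "(\<Sum>i\<in>I. mu i * cb Dm cap i) < 0" by blast
  define y where "y = (\<lambda>q. mu (CDL q) - mu (CDU q))"
  define z where "z = (\<lambda>e. mu (CCAP e))"
  have "\<forall>e\<in>E. z e \<ge> 0" using mu(1) unfolding z_def I_def by auto
  moreover have "\<forall>p\<in>P. y (pr p) \<le> (\<Sum>e\<in>E. if e \<in> ed p then z e else 0)"
  proof
    fix p assume p: "p \<in> P"
    have "0 = (\<Sum>i\<in>I. mu i * cA pr ed i p)" using mu(2) p by simp
    also have "\<dots> = (\<Sum>p'\<in>P. mu (CNN p') * cA pr ed (CNN p') p) + (\<Sum>q\<in>Q. mu (CDU q) * cA pr ed (CDU q) p)
        + (\<Sum>q\<in>Q. mu (CDL q) * cA pr ed (CDL q) p) + (\<Sum>e\<in>E. mu (CCAP e) * cA pr ed (CCAP e) p)"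
      unfolding I_def by (rule sum_cix[OF assms(1-3)])
    also have "(\<Sum>p'\<in>P. mu (CNN p') * cA pr ed (CNN p') p) = - mu (CNN p)"
    proof -
      have "(\<Sum>p'\<in>P. mu (CNN p') * cA pr ed (CNN p') p) = (\<Sum>p'\<in>P. if p = p' then - mu (CNN p') else 0)"
        by (intro sum.cong) auto
      then show ?thesis using p assms(1) by simp
    qed
    also have "(\<Sum>q\<in>Q. mu (CDU q) * cA pr ed (CDU q) p) = mu (CDU (pr p))"
    proof -
      have "(\<Sum>q\<in>Q. mu (CDU q) * cA pr ed (CDU q) p) = (\<Sum>q\<in>Q. if pr p = q then mu (CDU q) else 0)"
        by (intro sum.cong) auto
      then show ?thesis using p assms(2,4) by simp
    qed
    also have "(\<Sum>q\<in>Q. mu (CDL q) * cA pr ed (CDL q) p) = - mu (CDL (pr p))"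
    proof -
      have "(\<Sum>q\<in>Q. mu (CDL q) * cA pr ed (CDL q) p) = (\<Sum>q\<in>Q. if pr p = q then - mu (CDL q) else 0)"
        by (intro sum.cong) auto
      then show ?thesis using p assms(2,4) by simp
    qed
    also have "(\<Sum>e\<in>E. mu (CCAP e) * cA pr ed (CCAP e) p) = (\<Sum>e\<in>E. if e \<in> ed p then z e else 0)"
      unfolding z_def by (intro sum.cong) auto
    finally have "0 = - mu (CNN p) + mu (CDU (pr p)) + - mu (CDL (pr p)) + (\<Sum>e\<in>E. if e \<in> ed p then z e else 0)" .
    moreover have "mu (CNN p) \<ge> 0" using mu(1) p unfolding I_def by auto
    ultimately show "y (pr p) \<le> (\<Sum>e\<in>E. if e \<in> ed p then z e else 0)" unfolding y_def by linarith
  qed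
  moreover have "(\<Sum>q\<in>Q. y q * Dm q) > (\<Sum>e\<in>E. z e * cap e)"
  proof -
    have s1: "(\<Sum>i\<in>I. mu i * cb Dm cap i) = (\<Sum>q\<in>Q. mu (CDU q) * Dm q)
        + (\<Sum>q\<in>Q. mu (CDL q) * (- Dm q)) + (\<Sum>e\<in>E. mu (CCAP e) * cap e)"
      unfolding I_def using sum_cix[OF assms(1-3), of "\<lambda>i. mu i * cb Dm cap i"] by simp
    have s2: "(\<Sum>q\<in>Q. y q * Dm q) = (\<Sum>q\<in>Q. mu (CDL q) * Dm q) - (\<Sum>q\<in>Q. mu (CDU q) * Dm q)"
      unfolding y_def by (simp add: sum_subtractf[symmetric] algebra_simps)
    have s3: "(\<Sum>q\<in>Q. mu (CDL q) * (- Dm q)) = - (\<Sum>q\<in>Q. mu (CDL q) * Dm q)"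
      by (simp add: sum_negf[symmetric])
    have "(\<Sum>i\<in>I. mu i * cb Dm cap i) = - (\<Sum>q\<in>Q. y q * Dm q) + (\<Sum>e\<in>E. z e * cap e)"
      using s1 s2 s3 unfolding z_def by linarith
    then show ?thesis using mu(3) by linarith
  qed
  ultimately show ?thesis by blast
qed



lemma set_tl_sub: "set (tl p) \<subseteq> snd ` set (path_edges p)"
proof (induction p)
  case Nil then show ?case by simp
next
  case (Cons a p)
  show ?case
  proof (cases p)
    case Nil then show ?thesis by simp
  next
    case (Cons b q)
    have "path_edges (a # p) = (a, b) # path_edges p" unfolding path_edges_def Cons by simp
    moreover have "set (tl p) \<subseteq> snd ` set (path_edges p)" using Cons.IH .
    ultimately show ?thesis using Cons by auto
  qed
qed

lemma sp_set:
  assumes "simple_path E p v w" "E \<subseteq> V \<times> V" "v \<in> V"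
  shows "set p \<subseteq> V"
proof -
  have "p \<noteq> []" "hd p = v" using assms(1) unfolding simple_path_def by auto
  then have "set p = insert v (set (tl p))" by (metis list.exhaust_sel list.simps(15))
  moreover have "snd ` set (path_edges p) \<subseteq> V" using assms(1,2) unfolding simple_path_def by auto
  ultimately show ?thesis using set_tl_sub[of p] assms(3) by auto
qed

lemma finite_sp:
  assumes "finite V" "E \<subseteq> V \<times> V" "v \<in> V"
  shows "finite {p. simple_path E p v w}"
proof (rule finite_subset[OF _ finite_subset_distinct[OF assms(1)]])
  show "{p. simple_path E p v w} \<subseteq> {xs. set xs \<subseteq> V \<and> distinct xs}"
    using sp_set[OF _ assms(2,3)] unfolding simple_path_def by blast
qed

lemma sp_edges_distinct: "simple_path E p v w \<Longrightarrow> distinct (path_edges p)"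
  unfolding simple_path_def path_edges_def by (auto intro: distinct_zipI1)

lemma sp_edges_sub: "simple_path E p v w \<Longrightarrow> set (path_edges p) \<subseteq> E"
  unfolding simple_path_def by auto

lemma path_len_set: "simple_path E p v w \<Longrightarrow> path_len L p = (\<Sum>e\<in>set (path_edges p). L e)"
  unfolding path_len_def using sp_edges_distinct by (metis sum.distinct_set_conv_list)

lemma sp_single: "simple_path E [v] v v"
  unfolding simple_path_def path_edges_def by simp

lemma path_edges_single: "path_edges [v] = []"
  unfolding path_edges_def by simp

lemma sp_neq_edges:
  assumes "simple_path E p v w" "v \<noteq> w" shows "path_edges p \<noteq> []"
proof
  assume "path_edges p = []"
  then have "length p \<le> 1" unfolding path_edges_def by (cases p) auto
  moreover have "p \<noteq> []" "hd p = v" "last p = w" using assms(1) unfolding simple_path_def by auto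
  ultimately have "v = w" by (cases p) auto
  then show False using assms(2) by simp
qed

lemma dist_gt:
  assumes "finite {p. simple_path E p v w}"
    "\<And>p. simple_path E p v w \<Longrightarrow> path_len L p > c"
  shows "dist_G E L v w > ereal c"
proof (cases "{p. simple_path E p v w} = {}")
  case True
  then show ?thesis unfolding dist_G_def by (simp add: top_ereal_def)
next
  case False
  let ?A = "(\<lambda>p. ereal (path_len L p)) ` {p. simple_path E p v w}"
  have "Inf ?A = Min ?A" using False assms(1) by (intro cInf_eq_Min) auto
  moreover have "ereal c < Min ?A" using False assms by (subst Min_gr_iff) auto
  ultimately show ?thesis unfolding dist_G_def by simp
qed

lemma sep_nonneg:
  assumes "\<forall>v\<in>V. \<forall>w\<in>V. 0 \<le> D v w"
  shows "0 \<le> sep V E l h C D"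
  unfolding sep_def using assms by (intro sum_nonneg) auto

lemma moving_cut_nonneg: "moving_cut E h C \<Longrightarrow> e \<in> E \<Longrightarrow> 0 \<le> C e"
  unfolding moving_cut_def by auto

lemma spars_ineq:
  assumes "moving_cut E h C" "spars V E l u h C D \<ge> ereal \<phi>" "\<phi> > 0"
    "\<forall>v\<in>V. \<forall>w\<in>V. 0 \<le> D v w"
  shows "\<phi> * sep V E l h C D \<le> cut_size E u C"
proof -
  have cs: "0 \<le> cut_size E u C" unfolding cut_size_def
    using moving_cut_nonneg[OF assms(1)] by (intro sum_nonneg) auto
  have s: "0 \<le> sep V E l h C D" using sep_nonneg[OF assms(4)] .
  show ?thesis
  proof (cases "sep V E l h C D = 0")
    case True then show ?thesis using cs by simp
  next
    case False
    then have "\<phi> \<le> cut_size E u C / sep V E l h C D" using assms(2) unfolding spars_def by simp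
    then show ?thesis using False s by (simp add: field_simps)
  qed
qed



locale gset =
  fixes V :: "nat set" and E :: "(nat \<times> nat) set" and l :: "nat \<times> nat \<Rightarrow> nat"
    and u :: "nat \<times> nat \<Rightarrow> nat" and N :: nat and h :: nat and D :: "nat \<Rightarrow> nat \<Rightarrow> real"
    and \<phi> :: real
  assumes finV: "finite V" and EV: "E \<subseteq> V \<times> V" and N2: "2 \<le> N" and cardV: "card V \<le> N"
    and eprops: "\<forall>e\<in>E. 0 < l e \<and> l e \<le> N \<and> 0 < u e \<and> u e \<le> N"
    and hpos: "0 < h" and Dnn: "\<forall>v\<in>V. \<forall>w\<in>V. 0 \<le> D v w" and phipos: "0 < \<phi>"
    and hyp: "\<forall>C. moving_cut E h C \<longrightarrow> spars V E l u h C D \<ge> ereal \<phi>"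
begin

definition P :: "nat list set" where
  "P = {p. \<exists>v\<in>V. \<exists>w\<in>V. simple_path E p v w \<and> path_len (\<lambda>e. real (l e)) p \<le> real h}"

definition pr :: "nat list \<Rightarrow> nat \<times> nat" where "pr p = (hd p, last p)"

definition ed :: "nat list \<Rightarrow> (nat \<times> nat) set" where "ed p = set (path_edges p)"

definition Dq :: "nat \<times> nat \<Rightarrow> real" where "Dq q = D (fst q) (snd q)"

lemma finE: "finite E" using finV EV finite_subset by blast

lemma finP: "finite P"
proof (rule finite_subset[OF _ finite_subset_distinct[OF finV]])
  show "P \<subseteq> {xs. set xs \<subseteq> V \<and> distinct xs}"
    unfolding P_def using sp_set[OF _ EV] unfolding simple_path_def by blast
qed

lemma P_sp: "p \<in> P \<Longrightarrow> simple_path E p (hd p) (last p) \<and> hd p \<in> V \<and> last p \<in> V"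
  unfolding P_def simple_path_def by auto

lemma prP: "p \<in> P \<Longrightarrow> pr p \<in> V \<times> V"
  using P_sp unfolding pr_def by auto

lemma Pq: "v \<in> V \<Longrightarrow> w \<in> V \<Longrightarrow>
   {p\<in>P. pr p = (v, w)} = {p. simple_path E p v w \<and> path_len (\<lambda>e. real (l e)) p \<le> real h}"
  unfolding P_def pr_def simple_path_def by auto

lemma Dq_nn: "q \<in> V \<times> V \<Longrightarrow> 0 \<le> Dq q"
  using Dnn unfolding Dq_def by auto

lemma sep_eq: "sep V E l h C D = (\<Sum>q\<in>V \<times> V. if dist_G E (cut_len l h C) (fst q) (snd q) > ereal (real h) then Dq q else 0)"
proof -
  have "{(v, w) \<in> V \<times> V. dist_G E (cut_len l h C) v w > ereal (real h)} =
      {q \<in> V \<times> V. dist_G E (cut_len l h C) (fst q) (snd q) > ereal (real h)}" by auto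
  then have "sep V E l h C D = (\<Sum>q\<in>{q \<in> V \<times> V. dist_G E (cut_len l h C) (fst q) (snd q) > ereal (real h)}. Dq q)"
    unfolding sep_def Dq_def by (simp add: case_prod_beta)
  also have "\<dots> = (\<Sum>q\<in>V \<times> V. if dist_G E (cut_len l h C) (fst q) (snd q) > ereal (real h) then Dq q else 0)"
    using finV by (simp add: sum.inter_filter)
  finally show ?thesis .
qed

lemma sep_lower:
  assumes "\<And>q. q \<in> V \<times> V \<Longrightarrow> Pr q \<Longrightarrow> dist_G E (cut_len l h C) (fst q) (snd q) > ereal (real h)"
  shows "(\<Sum>q\<in>V \<times> V. if Pr q then Dq q else 0) \<le> sep V E l h C D"
  unfolding sep_eq using assms Dq_nn by (intro sum_mono) auto

lemma sep_bound:
  assumes "moving_cut E h C"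
    "\<And>q. q \<in> V \<times> V \<Longrightarrow> Pr q \<Longrightarrow> dist_G E (cut_len l h C) (fst q) (snd q) > ereal (real h)"
  shows "\<phi> * (\<Sum>q\<in>V \<times> V. if Pr q then Dq q else 0) \<le> cut_size E u C"
proof -
  have "\<phi> * (\<Sum>q\<in>V \<times> V. if Pr q then Dq q else 0) \<le> \<phi> * sep V E l h C D"
    using sep_lower[OF assms(2)] phipos by (intro mult_left_mono) auto
  also have "\<dots> \<le> cut_size E u C" using spars_ineq[OF assms(1) _ phipos Dnn] hyp assms(1) by blast
  finally show ?thesis .
qed

lemma cut_len_path:
  assumes "simple_path E p v w"
  shows "path_len (cut_len l h C) p = (\<Sum>e\<in>ed p. real (l e) + real h * C e)"
  unfolding path_len_set[OF assms] ed_def cut_len_def by simp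

lemma Pq_nonempty:
  assumes "q \<in> V \<times> V" "Dq q > 0" shows "{p\<in>P. pr p = q} \<noteq> {}"
proof
  assume em: "{p\<in>P. pr p = q} = {}"
  obtain v w where q: "q = (v, w)" "v \<in> V" "w \<in> V" using assms(1) by auto
  define C0 where "C0 = (\<lambda>e::nat \<times> nat. 0::real)"
  have mc: "moving_cut E h C0" unfolding moving_cut_def C0_def by (auto intro: exI[of _ 0])
  have cs: "cut_size E u C0 = 0" unfolding cut_size_def C0_def by simp
  have "dist_G E (cut_len l h C0) (fst q') (snd q') > ereal (real h)" if "q' \<in> V \<times> V" "q' = q" for q'
  proof -
    have "path_len (cut_len l h C0) p > real h" if "simple_path E p v w" for p
    proof -
      have "path_len (cut_len l h C0) p = path_len (\<lambda>e. real (l e)) p"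
        unfolding path_len_def cut_len_def C0_def by simp
      moreover have "\<not> path_len (\<lambda>e. real (l e)) p \<le> real h" using em Pq[OF q(2,3)] that q(1) by auto
      ultimately show ?thesis by simp
    qed
    then show ?thesis using that q finite_sp[OF finV EV q(2)] by (auto intro: dist_gt)
  qed
  from sep_bound[OF mc, of "\<lambda>q'. q' = q", OF this] have
    "\<phi> * (\<Sum>q'\<in>V \<times> V. if q' = q then Dq q' else 0) \<le> 0" using cs by auto
  moreover have "(\<Sum>q'\<in>V \<times> V. if q' = q then Dq q' else 0) = Dq q" using assms(1) finV by simp
  ultimately show False using phipos assms(2) by (simp add: mult_le_0_iff)
qed

end



locale gz = gset +
  fixes z :: "nat \<times> nat \<Rightarrow> real"
  assumes znn: "\<forall>e\<in>E. z e \<ge> 0"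
begin

definition Z :: "nat list \<Rightarrow> real" where "Z p = (\<Sum>e\<in>E. if e \<in> ed p then z e else 0)"
definition dd :: "nat \<times> nat \<Rightarrow> real" where
  "dd q = (if {p\<in>P. pr p = q} \<noteq> {} then Min (Z ` {p\<in>P. pr p = q}) else 0)"
definition W :: real where "W = (\<Sum>e\<in>E. z e * real (u e))"
definition U :: real where "U = (\<Sum>e\<in>E. real (u e))"

lemma Z_ed: "p \<in> P \<Longrightarrow> Z p = (\<Sum>e\<in>ed p. z e)"
proof -
  assume p: "p \<in> P"
  have sub: "ed p \<subseteq> E" using P_sp[OF p] sp_edges_sub unfolding ed_def by blast
  have "Z p = (\<Sum>e\<in>E \<inter> ed p. z e)" unfolding Z_def using finE by (simp add: sum.inter_restrict)
  also have "E \<inter> ed p = ed p" using sub by blast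
  finally show ?thesis .
qed

lemma Z_nn: "0 \<le> Z p" unfolding Z_def using znn by (intro sum_nonneg) auto

lemma Z_le_W: "Z p \<le> W"
proof -
  have "Z p \<le> (\<Sum>e\<in>E. z e)" unfolding Z_def using znn by (intro sum_mono) auto
  also have "\<dots> \<le> W" unfolding W_def using znn eprops
    by (intro sum_mono) (auto intro!: mult_le_cancel_left1[THEN iffD2] simp: Suc_le_eq)
  finally show ?thesis .
qed

lemma W_nn: "0 \<le> W" unfolding W_def using znn by (intro sum_nonneg) auto

lemma finPq: "finite {p\<in>P. pr p = q}" using finP by auto

lemma dd_le: "p \<in> P \<Longrightarrow> pr p = q \<Longrightarrow> dd q \<le> Z p"
  unfolding dd_def using finPq by (auto intro!: Min_le)

lemma dd_nn: "0 \<le> dd q"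
  unfolding dd_def using finPq Z_nn by (auto intro!: Min.boundedI)

lemma dd_le_W: "dd q \<le> W"
proof (cases "{p\<in>P. pr p = q} = {}")
  case True then show ?thesis unfolding dd_def using W_nn by simp
next
  case False
  then obtain p where "p \<in> P" "pr p = q" by auto
  then show ?thesis using dd_le Z_le_W by (meson order_trans)
qed

lemma dd_diag: "v \<in> V \<Longrightarrow> dd (v, v) = 0"
proof -
  assume v: "v \<in> V"
  have "[v] \<in> P" unfolding P_def using v sp_single[of E v]
    by (auto simp: path_len_def path_edges_single)
  moreover have "pr [v] = (v, v)" unfolding pr_def by simp
  moreover have "Z [v] = 0" unfolding Z_def ed_def path_edges_single by simp
  ultimately have "dd (v, v) \<le> 0" using dd_le by fastforce
  then show ?thesis using dd_nn[of "(v,v)"] by simp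
qed

lemma ones_bound: "\<phi> * (\<Sum>q\<in>V \<times> V. if fst q \<noteq> snd q then Dq q else 0) \<le> U"
proof -
  define C1 where "C1 = (\<lambda>e::nat \<times> nat. real h / real h)"
  have mc: "moving_cut E h C1" unfolding moving_cut_def C1_def by auto
  have C1: "C1 e = 1" for e unfolding C1_def using hpos by simp
  have cs: "cut_size E u C1 = U" unfolding cut_size_def U_def C1 by simp
  have "dist_G E (cut_len l h C1) (fst q) (snd q) > ereal (real h)"
    if q: "q \<in> V \<times> V" "fst q \<noteq> snd q" for q
  proof (rule dist_gt)
    show "finite {p. simple_path E p (fst q) (snd q)}" using finite_sp[OF finV EV] q by auto
    fix p assume sp: "simple_path E p (fst q) (snd q)"
    obtain e where e: "e \<in> ed p" using sp_neq_edges[OF sp q(2)] unfolding ed_def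
      by (metis list.set_sel(1))
    have fin: "finite (ed p)" unfolding ed_def by simp
    have "real h < real (l e) + real h * C1 e" using C1 eprops sp_edges_sub[OF sp] e
      unfolding ed_def by auto
    also have "\<dots> \<le> (\<Sum>e\<in>ed p. real (l e) + real h * C1 e)"
      using e fin by (intro member_le_sum) (auto simp: C1)
    finally show "path_len (cut_len l h C1) p > real h" using cut_len_path[OF sp] by simp
  qed
  from sep_bound[OF mc, of "\<lambda>q. fst q \<noteq> snd q", OF this] cs show ?thesis by auto
qed

definition Ct :: "real \<Rightarrow> nat \<times> nat \<Rightarrow> real" where
  "Ct t e = real (min h (nat \<lfloor>2 * real h * z e / t\<rfloor>)) / real h"

lemma cut_bound:
  assumes t: "t > 0"
  shows "\<phi> * (\<Sum>q\<in>V \<times> V. if dd q \<ge> t then Dq q else 0) \<le> 2 * W / t"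
proof -
  have mc: "moving_cut E h (Ct t)" unfolding moving_cut_def Ct_def
    by (auto intro!: exI[of _ "min h (nat \<lfloor>2 * real h * z _ / t\<rfloor>)"])
  have Ct_le: "Ct t e \<le> 2 * z e / t" if "e \<in> E" for e
  proof -
    have x0: "0 \<le> 2 * real h * z e / t" using znn that t by auto
    have "real (min h (nat \<lfloor>2 * real h * z e / t\<rfloor>)) \<le> real (nat \<lfloor>2 * real h * z e / t\<rfloor>)" by simp
    also have "\<dots> \<le> 2 * real h * z e / t" using x0 by linarith
    finally have "real (min h (nat \<lfloor>2 * real h * z e / t\<rfloor>)) / real h \<le> (2 * real h * z e / t) / real h"
      by (rule divide_right_mono) auto
    also have "\<dots> = 2 * z e / t" using hpos by simp
    finally show ?thesis unfolding Ct_def .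
  qed
  have cs: "cut_size E u (Ct t) \<le> 2 * W / t"
  proof -
    have "cut_size E u (Ct t) \<le> (\<Sum>e\<in>E. real (u e) * (2 * z e / t))"
      unfolding cut_size_def using Ct_le by (intro sum_mono mult_left_mono) auto
    also have "\<dots> = 2 * W / t" unfolding W_def by (simp add: sum_divide_distrib sum_distrib_left algebra_simps)
    finally show ?thesis .
  qed
  have "dist_G E (cut_len l h (Ct t)) (fst q) (snd q) > ereal (real h)"
    if q: "q \<in> V \<times> V" "dd q \<ge> t" for q
  proof (rule dist_gt)
    show "finite {p. simple_path E p (fst q) (snd q)}" using finite_sp[OF finV EV] q by auto
    fix p assume sp: "simple_path E p (fst q) (snd q)"
    have fin: "finite (ed p)" unfolding ed_def by simp
    have Ct_nn: "0 \<le> Ct t e" for e unfolding Ct_def by simp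
    have edE: "ed p \<subseteq> E" using sp_edges_sub[OF sp] unfolding ed_def .
    show "path_len (cut_len l h (Ct t)) p > real h"
    proof (cases "path_len (\<lambda>e. real (l e)) p \<le> real h")
      case False
      have "path_len (\<lambda>e. real (l e)) p = (\<Sum>e\<in>ed p. real (l e))"
        using path_len_set[OF sp] unfolding ed_def by simp
      also have "\<dots> \<le> (\<Sum>e\<in>ed p. real (l e) + real h * Ct t e)"
        using Ct_nn by (intro sum_mono) auto
      finally show ?thesis using False cut_len_path[OF sp] by simp
    next
      case True
      have pP: "p \<in> P" "pr p = q" using True sp q unfolding P_def pr_def simple_path_def by auto
      have Zt: "t \<le> (\<Sum>e\<in>ed p. z e)" using dd_le[OF pP] q(2) Z_ed[OF pP(1)] by simp
      show ?thesis
      proof (cases "\<exists>e\<in>ed p. h \<le> nat \<lfloor>2 * real h * z e / t\<rfloor>")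
        case True
        then obtain e where e: "e \<in> ed p" "h \<le> nat \<lfloor>2 * real h * z e / t\<rfloor>" by blast
        have "Ct t e = 1" unfolding Ct_def using e(2) hpos by (simp add: min_def)
        then have "real h < real (l e) + real h * Ct t e" using eprops e edE by auto
        also have "\<dots> \<le> (\<Sum>e\<in>ed p. real (l e) + real h * Ct t e)"
          using e fin Ct_nn by (intro member_le_sum) auto
        finally show ?thesis using cut_len_path[OF sp] by simp
      next
        case False
        have "2 * real h * z e / t \<le> real (l e) + real h * Ct t e" if e: "e \<in> ed p" for e
        proof -
          have "\<not> h \<le> nat \<lfloor>2 * real h * z e / t\<rfloor>" using False e by blast
          then have "real h * Ct t e = real (nat \<lfloor>2 * real h * z e / t\<rfloor>)"
            unfolding Ct_def using hpos by (simp add: min_def)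
          moreover have "2 * real h * z e / t < real (nat \<lfloor>2 * real h * z e / t\<rfloor>) + 1" by linarith
          moreover have "1 \<le> real (l e)" using eprops e edE by (auto simp: Suc_le_eq)
          ultimately show ?thesis by linarith
        qed
        then have "(\<Sum>e\<in>ed p. 2 * real h * z e / t) \<le> (\<Sum>e\<in>ed p. real (l e) + real h * Ct t e)"
          by (intro sum_mono) auto
        moreover have "(\<Sum>e\<in>ed p. 2 * real h * z e / t) = 2 * real h / t * (\<Sum>e\<in>ed p. z e)"
          by (simp add: sum_distrib_left sum_divide_distrib algebra_simps)
        moreover have "2 * real h / t * t \<le> 2 * real h / t * (\<Sum>e\<in>ed p. z e)"
          using Zt t by (intro mult_left_mono) auto
        moreover have "2 * real h / t * t = 2 * real h" using t by simp
        ultimately show ?thesis using cut_len_path[OF sp] hpos by simp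
      qed
    qed
  qed
  from sep_bound[OF mc, of "\<lambda>q. dd q \<ge> t", OF this] cs show ?thesis by auto
qed

end



lemma lin_aux: "(d::real) \<le> a + 2 * S \<Longrightarrow> a = 2 * b \<Longrightarrow> 0 \<le> b \<Longrightarrow> d \<le> b + 2 * (S + b)"
  by simp

lemma pw_bound:
  fixes d W :: real
  assumes "0 \<le> d" "d \<le> W"
  shows "d \<le> (if d > 0 then W / 2^L else 0) + 2 * (\<Sum>i<L. if d \<ge> W / 2^(Suc i) then W / 2^(Suc i) else 0)"
proof (induction L)
  case 0 then show ?case using assms by auto
next
  case (Suc L)
  have W0: "0 \<le> W" using assms by linarith
  have S0: "0 \<le> (\<Sum>i<L. if d \<ge> W / 2^(Suc i) then W / 2^(Suc i) else (0::real))"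
    using W0 by (intro sum_nonneg) auto
  show ?case
  proof (cases "d \<ge> W / 2^(Suc L)")
    case True
    have pos: "d > 0 \<or> W = 0"
    proof (cases "W = 0")
      case False
      then have "W / 2^(Suc L) > 0" using W0 by simp
      then show ?thesis using True by linarith
    qed simp
    have eq: "(\<Sum>i<Suc L. if d \<ge> W / 2^(Suc i) then W / 2^(Suc i) else (0::real)) =
       (\<Sum>i<L. if d \<ge> W / 2^(Suc i) then W / 2^(Suc i) else 0) + W / 2^(Suc L)"
      using True by simp
    have h2: "W / 2 ^ L = 2 * (W / 2 ^ Suc L)" by simp
    have h3: "0 \<le> W / 2 ^ Suc L" using W0 by simp
    show ?thesis
    proof (cases "d > 0")
      case True
      have IH': "d \<le> W / 2 ^ L + 2 * (\<Sum>i<L. if d \<ge> W / 2^(Suc i) then W / 2^(Suc i) else 0)"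
        using Suc.IH True by (simp only: if_True)
      have i1: "(if d > 0 then W / 2 ^ Suc L else 0) = W / 2 ^ Suc L" using True by (simp only: if_True)
      show ?thesis unfolding i1 eq by (rule lin_aux[OF IH' h2 h3])
    next
      case False
      then have "d = 0" using assms(1) by simp
      moreover have "0 \<le> (\<Sum>i<Suc L. if d \<ge> W / 2^(Suc i) then W / 2^(Suc i) else (0::real))"
        using W0 by (intro sum_nonneg) auto
      ultimately show ?thesis by simp
    qed
  next
    case False
    then have "d \<le> W / 2^(Suc L)" by simp
    moreover have "0 \<le> (\<Sum>i<Suc L. if d \<ge> W / 2^(Suc i) then W / 2^(Suc i) else (0::real))"
      using W0 by (intro sum_nonneg) auto
    ultimately show ?thesis using assms(1) by auto
  qed
qed

lemma log_arith:
  assumes "2 \<le> N"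
  shows "\<exists>m. real N ^ 3 \<le> 2 ^ (3 * m) \<and> 1 + 12 * real m \<le> 40 * ln (real N)"
proof -
  define m where "m = (LEAST m. N \<le> 2 ^ m)"
  have ex: "N \<le> 2 ^ N" using less_exp[of N] by simp
  have m1: "N \<le> 2 ^ m" unfolding m_def by (rule LeastI[of _ N]) (rule ex)
  have m0: "m \<noteq> 0" using m1 assms by (cases m) auto
  have m2: "\<not> N \<le> 2 ^ (m - 1)" unfolding m_def
    by (rule not_less_Least) (use m0 in \<open>simp add: m_def\<close>)
  have "real N ^ 3 \<le> (2 ^ m) ^ 3" using m1 by (metis of_nat_le_iff of_nat_numeral of_nat_power power_mono of_nat_0_le_iff)
  also have "\<dots> = 2 ^ (3 * m)" by (simp add: power_mult[symmetric] mult.commute)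
  finally have A: "real N ^ 3 \<le> 2 ^ (3 * m)" .
  have lnN: "2/3 \<le> ln (real N)"
  proof -
    have "ln 2 \<le> ln (real N)" using assms by simp
    then show ?thesis using ln2_ge_two_thirds by simp
  qed
  have "real (2 ^ (m - 1)) < real N" using m2 by simp
  then have "ln (2 ^ (m - 1)) < ln (real N)" by simp
  then have "real (m - 1) * ln 2 < ln (real N)" by (simp add: ln_realpow)
  then have "real (m - 1) * (2/3) < ln (real N)"
    using ln2_ge_two_thirds by (smt (verit) mult_left_mono of_nat_0_le_iff)
  then have "real m \<le> 3 / 2 * ln (real N) + 1" using m0 by (simp add: of_nat_diff)
  then have "1 + 12 * real m \<le> 40 * ln (real N)" using lnN by linarith
  then show ?thesis using A by blast
qed

context gz
begin

lemma R_bound: "(\<Sum>q\<in>V \<times> V. Dq q * dd q) \<le> W * U / (2^L * \<phi>) + 4 * real L * W / \<phi>"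
proof (cases "W = 0")
  case True
  then have "dd q = 0" for q using dd_le_W[of q] dd_nn[of q] by simp
  then show ?thesis using True by simp
next
  case False
  then have Wp: "W > 0" using W_nn by simp
  define A where "A = (\<lambda>q. if dd q > 0 then W / 2^L else (0::real))"
  define B where "B = (\<lambda>i q. if dd q \<ge> W / 2^(Suc i) then W / 2^(Suc i) else (0::real))"
  have "(\<Sum>q\<in>V \<times> V. Dq q * dd q) \<le> (\<Sum>q\<in>V \<times> V. Dq q * (A q + 2 * (\<Sum>i<L. B i q)))"
    unfolding A_def B_def using pw_bound[OF dd_nn dd_le_W] Dq_nn
    by (intro sum_mono mult_left_mono) auto
  also have "\<dots> = (\<Sum>q\<in>V \<times> V. Dq q * A q) + 2 * (\<Sum>i<L. \<Sum>q\<in>V \<times> V. Dq q * B i q)"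
    by (simp add: algebra_simps sum.distrib sum_distrib_left sum.swap[of _ "{..<L}"])
  also have "(\<Sum>q\<in>V \<times> V. Dq q * A q) \<le> W * U / (2^L * \<phi>)"
  proof -
    have "(\<Sum>q\<in>V \<times> V. Dq q * A q) = (\<Sum>q\<in>V \<times> V. W / 2^L * (if dd q > 0 then Dq q else 0))"
      unfolding A_def by (intro sum.cong) auto
    also have "\<dots> = W / 2^L * (\<Sum>q\<in>V \<times> V. if dd q > 0 then Dq q else 0)"
      by (simp add: sum_distrib_left)
    also have "(\<Sum>q\<in>V \<times> V. if dd q > 0 then Dq q else 0) \<le> (\<Sum>q\<in>V \<times> V. if fst q \<noteq> snd q then Dq q else 0)"
      using dd_diag Dq_nn by (intro sum_mono) auto
    also have "(\<Sum>q\<in>V \<times> V. if fst q \<noteq> snd q then Dq q else 0) \<le> U / \<phi>"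
      using ones_bound phipos by (simp add: field_simps mult.commute)
    finally show ?thesis using Wp phipos by (simp add: field_simps mult_left_mono)
  qed
  also have "(\<Sum>i<L. \<Sum>q\<in>V \<times> V. Dq q * B i q) \<le> (\<Sum>i<L. 2 * W / \<phi>)"
  proof (intro sum_mono)
    fix i
    define t where "t = W / 2^(Suc i)"
    have t: "t > 0" unfolding t_def using Wp by simp
    have "(\<Sum>q\<in>V \<times> V. Dq q * B i q) = (\<Sum>q\<in>V \<times> V. t * (if dd q \<ge> t then Dq q else 0))"
      unfolding B_def t_def[symmetric] by (intro sum.cong) auto
    also have "\<dots> = t * (\<Sum>q\<in>V \<times> V. if dd q \<ge> t then Dq q else 0)"
      by (simp add: sum_distrib_left)
    also have "(\<Sum>q\<in>V \<times> V. if dd q \<ge> t then Dq q else 0) \<le> 2 * W / t / \<phi>"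
      using cut_bound[OF t] by (subst pos_le_divide_eq[OF phipos]) (simp add: mult.commute)
    finally show "(\<Sum>q\<in>V \<times> V. Dq q * B i q) \<le> 2 * W / \<phi>"
      using t phipos by (simp add: field_simps mult_left_mono)
  qed
  finally show ?thesis by (simp add: field_simps)
qed

end



lemma sp_hd_V:
  assumes "simple_path E p v w" "path_edges p \<noteq> []" "E \<subseteq> V \<times> V"
  shows "v \<in> V"
proof (cases p)
  case Nil then show ?thesis using assms(1) unfolding simple_path_def by simp
next
  case (Cons a r)
  then obtain b r' where r: "r = b # r'" using assms(2) unfolding path_edges_def by (cases r) auto
  have "(a, b) \<in> set (path_edges p)" unfolding path_edges_def Cons r by simp
  then have "(a, b) \<in> E" using assms(1) unfolding simple_path_def by blast
  moreover have "v = a" using assms(1) Cons unfolding simple_path_def by simp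
  ultimately show ?thesis using assms(3) by blast
qed

context gset
begin

lemma flow_exists:
  "\<exists>f. is_flow E f \<and> routes V E f D \<and>
     (\<forall>p. f p > 0 \<longrightarrow> path_len (\<lambda>e. real (l e)) p \<le> real h) \<and>
     congestion E u f \<le> 40 * ln (real N) / \<phi>"
proof -
  define K where "K = 40 * ln (real N) / \<phi>"
  have lnN: "0 < ln (real N)" using N2 by simp
  have K0: "0 \<le> K" unfolding K_def using lnN phipos by simp
  define cap where "cap = (\<lambda>e. K * real (u e))"
  have finQ: "finite (V \<times> V)" using finV by simp
  have "\<exists>g. (\<forall>p\<in>P. g p \<ge> 0) \<and> (\<forall>q\<in>V \<times> V. (\<Sum>p\<in>{p\<in>P. pr p = q}. g p) = Dq q) \<and>
        (\<forall>e\<in>E. (\<Sum>p\<in>{p\<in>P. e \<in> ed p}. g p) \<le> cap e)"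
  proof (rule ccontr)
    assume nf: "\<not> ?thesis"
    from lp_alt[OF finP finQ finE _ nf] prP obtain y z where
      yz: "\<forall>e\<in>E. z e \<ge> 0" "\<forall>p\<in>P. y (pr p) \<le> (\<Sum>e\<in>E. if e \<in> ed p then z e else 0)"
        "(\<Sum>q\<in>V \<times> V. y q * Dq q) > (\<Sum>e\<in>E. z e * cap e)" by blast
    interpret Z: gz V E l u N h D \<phi> z using gset_axioms yz(1) by (simp add: gz_def gz_axioms_def)
    have "(\<Sum>q\<in>V \<times> V. y q * Dq q) \<le> (\<Sum>q\<in>V \<times> V. Dq q * Z.dd q)"
    proof (intro sum_mono)
      fix q assume q: "q \<in> V \<times> V"
      show "y q * Dq q \<le> Dq q * Z.dd q"
      proof (cases "Dq q = 0")
        case True then show ?thesis by simp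
      next
        case False
        then have Dp: "Dq q > 0" using Dq_nn[OF q] by simp
        have ne: "{p\<in>P. pr p = q} \<noteq> {}" using Pq_nonempty[OF q Dp] .
        have "y q \<le> Min (Z.Z ` {p\<in>P. pr p = q})"
          using ne Z.finPq yz(2) unfolding Z.Z_def by (auto intro!: Min.boundedI)
        then have "y q \<le> Z.dd q" unfolding Z.dd_def using ne by simp
        then show ?thesis using Dp by (simp add: mult.commute mult_left_mono)
      qed
    qed
    obtain m where m: "real N ^ 3 \<le> 2 ^ (3 * m)" "1 + 12 * real m \<le> 40 * ln (real N)"
      using log_arith[OF N2] by blast
    have UN: "Z.U \<le> 2 ^ (3 * m)"
    proof -
      have "Z.U \<le> (\<Sum>e\<in>E. real N)" unfolding Z.U_def using eprops by (intro sum_mono) auto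
      also have "\<dots> = real (card E) * real N" by simp
      also have "real (card E) \<le> real N * real N"
      proof -
        have "card E \<le> card (V \<times> V)" using EV finQ by (rule card_mono[rotated])
        also have "\<dots> = card V * card V" by (simp add: card_cartesian_product)
        also have "\<dots> \<le> N * N" using cardV by (simp add: mult_le_mono)
        finally show ?thesis by (metis of_nat_le_iff of_nat_mult)
      qed
      then have "real (card E) * real N \<le> real N * real N * real N" by (simp add: mult_right_mono)
      also have "\<dots> = real N ^ 3" by (simp add: power3_eq_cube)
      finally show ?thesis using m(1) by linarith
    qed
    have "(\<Sum>q\<in>V \<times> V. Dq q * Z.dd q) \<le> Z.W * Z.U / (2^(3*m) * \<phi>) + 4 * real (3*m) * Z.W / \<phi>"
      by (rule Z.R_bound)
    also have "Z.W * Z.U / (2^(3*m) * \<phi>) \<le> Z.W / \<phi>"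
    proof -
      have "Z.W * Z.U \<le> Z.W * 2^(3*m)" using UN Z.W_nn by (intro mult_left_mono) auto
      then have "Z.W * Z.U / (2^(3*m) * \<phi>) \<le> Z.W * 2^(3*m) / (2^(3*m) * \<phi>)"
        using phipos by (intro divide_right_mono) auto
      then show ?thesis by simp
    qed
    also have "Z.W / \<phi> + 4 * real (3*m) * Z.W / \<phi> = (1 + 12 * real m) * Z.W / \<phi>"
      by (simp add: add_divide_distrib algebra_simps)
    also have "\<dots> \<le> 40 * ln (real N) * Z.W / \<phi>"
      using m(2) Z.W_nn phipos by (intro divide_right_mono mult_right_mono) auto
    also have "\<dots> = (\<Sum>e\<in>E. z e * cap e)"
      unfolding Z.W_def cap_def K_def by (simp add: sum_distrib_left sum_divide_distrib algebra_simps)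
    finally show False using yz(3) \<open>(\<Sum>q\<in>V \<times> V. y q * Dq q) \<le> _\<close> by linarith
  qed
  then obtain g where g: "\<forall>p\<in>P. g p \<ge> 0" "\<forall>q\<in>V \<times> V. (\<Sum>p\<in>{p\<in>P. pr p = q}. g p) = Dq q"
      "\<forall>e\<in>E. (\<Sum>p\<in>{p\<in>P. e \<in> ed p}. g p) \<le> cap e" by blast
  define f where "f = (\<lambda>p. if p \<in> P then g p else 0)"
  have "is_flow E f" unfolding is_flow_def f_def using g(1) P_sp by auto
  moreover have "routes V E f D"
    unfolding routes_def
  proof (intro ballI)
    fix v w assume v: "v \<in> V" and w: "w \<in> V"
    have fin: "finite {p. simple_path E p v w}" using finite_sp[OF finV EV v] .
    have "(\<Sum>p\<in>{p. simple_path E p v w}. f p) = (\<Sum>p\<in>{p. simple_path E p v w} \<inter> P. g p)"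
      unfolding f_def using fin by (simp add: sum.inter_restrict)
    also have "{p. simple_path E p v w} \<inter> P = {p\<in>P. pr p = (v, w)}"
      using P_sp unfolding pr_def simple_path_def by auto
    also have "(\<Sum>p\<in>{p\<in>P. pr p = (v, w)}. g p) = D v w" using g(2) v w unfolding Dq_def by auto
    finally show "(\<Sum>p\<in>{p. simple_path E p v w}. f p) = D v w" .
  qed
  moreover have "\<forall>p. f p > 0 \<longrightarrow> path_len (\<lambda>e. real (l e)) p \<le> real h"
    unfolding f_def P_def by auto
  moreover have "congestion E u f \<le> K"
    unfolding congestion_def
  proof (subst Max_le_iff)
    show "finite (insert 0 ((\<lambda>e. edge_flow E f e / real (u e)) ` E))" using finE by simp
    show "insert 0 ((\<lambda>e. edge_flow E f e / real (u e)) ` E) \<noteq> {}" by simp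
    show "\<forall>a\<in>insert 0 ((\<lambda>e. edge_flow E f e / real (u e)) ` E). a \<le> K"
    proof
      fix a assume "a \<in> insert 0 ((\<lambda>e. edge_flow E f e / real (u e)) ` E)"
      then consider "a = 0" | e where "e \<in> E" "a = edge_flow E f e / real (u e)" by auto
      then show "a \<le> K"
      proof cases
        case 1 then show ?thesis using K0 by simp
      next
        case 2
        define B where "B = {p. (\<exists>v w. simple_path E p v w) \<and> e \<in> set (path_edges p)}"
        have finB: "finite B"
        proof (rule finite_subset[OF _ finite_subset_distinct[OF finV]])
          show "B \<subseteq> {xs. set xs \<subseteq> V \<and> distinct xs}"
          proof
            fix p assume "p \<in> B"
            then obtain v w where sp: "simple_path E p v w" and e: "e \<in> set (path_edges p)"
              unfolding B_def by blast
            have "path_edges p \<noteq> []" using e by auto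
            then have "v \<in> V" using sp_hd_V[OF sp _ EV] by blast
            then show "p \<in> {xs. set xs \<subseteq> V \<and> distinct xs}"
              using sp_set[OF sp EV] sp unfolding simple_path_def by auto
          qed
        qed
        have "edge_flow E f e = (\<Sum>p\<in>B \<inter> P. g p)"
          unfolding edge_flow_def B_def[symmetric] f_def using finB by (simp add: sum.inter_restrict)
        also have "B \<inter> P = {p\<in>P. e \<in> ed p}" unfolding B_def ed_def using P_sp by blast
        finally have "edge_flow E f e \<le> K * real (u e)" using g(3) 2(1) unfolding cap_def by simp
        moreover have "real (u e) > 0" using eprops 2(1) by auto
        ultimately show ?thesis using 2(2) by (simp add: divide_le_eq)
      qed
    qed
  qed
  ultimately show ?thesis unfolding K_def by blast
qed

end

theorem theoremA4:
  "\<forall>k::nat. \<exists>c::real. c > 0 \<and>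
    (\<forall>(V::nat set) (E::(nat \<times> nat) set) (l::nat \<times> nat \<Rightarrow> nat) (u::nat \<times> nat \<Rightarrow> nat)
       (N::nat) (h::nat) (D::nat \<Rightarrow> nat \<Rightarrow> real) (\<phi>::real).
      finite V \<and> E \<subseteq> V \<times> V \<and> 2 \<le> N \<and> card V \<le> N \<and> N \<le> card V ^ k \<and>
      (\<forall>e\<in>E. 0 < l e \<and> l e \<le> N \<and> 0 < u e \<and> u e \<le> N) \<and>
      0 < h \<and> (\<forall>v\<in>V. \<forall>w\<in>V. 0 \<le> D v w) \<and> 0 < \<phi> \<and>
      (\<forall>C. moving_cut E h C \<longrightarrow> spars V E l u h C D \<ge> ereal \<phi>)
      \<longrightarrow> (\<exists>f. is_flow E f \<and> routes V E f D \<and>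
             (\<forall>p. f p > 0 \<longrightarrow> path_len (\<lambda>e. real (l e)) p \<le> real h) \<and>
             congestion E u f \<le> c * ln (real N) / \<phi>))"
proof (intro allI exI[of _ "40::real"] conjI impI)
  show "(0::real) < 40" by simp
  fix k :: nat and V :: "nat set" and E :: "(nat \<times> nat) set" and l :: "nat \<times> nat \<Rightarrow> nat"
    and u :: "nat \<times> nat \<Rightarrow> nat" and N :: nat and h :: nat and D :: "nat \<Rightarrow> nat \<Rightarrow> real" and \<phi> :: real
  assume a: "finite V \<and> E \<subseteq> V \<times> V \<and> 2 \<le> N \<and> card V \<le> N \<and> N \<le> card V ^ k \<and>
      (\<forall>e\<in>E. 0 < l e \<and> l e \<le> N \<and> 0 < u e \<and> u e \<le> N) \<and>
      0 < h \<and> (\<forall>v\<in>V. \<forall>w\<in>V. 0 \<le> D v w) \<and> 0 < \<phi> \<and>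
      (\<forall>C. moving_cut E h C \<longrightarrow> spars V E l u h C D \<ge> ereal \<phi>)"
  interpret gset V E l u N h D \<phi> using a by (simp add: gset_def)
  show "\<exists>f. is_flow E f \<and> routes V E f D \<and>
             (\<forall>p. f p > 0 \<longrightarrow> path_len (\<lambda>e. real (l e)) p \<le> real h) \<and>
             congestion E u f \<le> 40 * ln (real N) / \<phi>"
    by (rule flow_exists)
qed

end
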